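(* For every $t\in I$, $\tau\in(0,T-t)$ and $x\in\mathbb{R}^n$, $\widetilde Y(\tau,t,x)\subset\mathrm{cl}\,Y(t,x)$, where $\widetilde Y(\tau,t,x)=\bigcup_{u\in\mathcal{U}}\big(J(t,t+\tau,x,u)+V(t+\tau,x(t+\tau;t,x,u))\big)$.
   Context: Setting (MOC). Fix $T>0$, $I=[0,T]$, integers $n,m,p\ge1$, nonempty compact $U\subset\mathbb{R}^m$. $f:\mathbb{R}^n\times U\to\mathbb{R}^n$ continuous with $\|f(x_1,u)-f(x_2,u)\|\le K_f\|x_1-x_2\|$, $\|f(x,u)\|\le M_f$. $L:\mathbb{R}^n\times U\to\mathbb{R}^p$ continuous, bounded, Lipschitz in $x$ uniformly in $u$. Controls $\mathcal{U}$: bounded Lebesgue measurable $u:I\to U$. $x(s;t,x,u)$ solves $\dot x=f(x,u(s))$ on $[t,T]$, $x(t)=x$; $J(t,t',x,u)=\int_t^{t'}L(x(s;t,x,u),u(s))ds$; $Y(t,x)=\{J(t,T,x,u):u\in\mathcal{U}\}$. $P\subset\mathbb{R}^p$: closed convex pointed cone containing $0$ with nonempty interior; $\mathcal{E}(S,P)=\{y\in S:(y-P)\cap S=\{y\}\}$; $V(t,x)=\mathcal{E}(\mathrm{cl}\,Y(t,x),P)$. *)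

theory Defs
  imports "HOL-Analysis.Analysis"
begin

definition controls :: "real \<Rightarrow> ('m::euclidean_space) set \<Rightarrow> (real \<Rightarrow> 'm) set" where
  "controls T U = {u. u \<in> borel_measurable (lebesgue_on {0..T}) \<and>
                       (\<forall>s\<in>{0..T}. u s \<in> U) \<and> bounded (u ` {0..T})}"

text \<open>Trajectory x(s;t,x,u): the (Caratheodory) solution of x' = f(x,u(s)) on [t,T], x(t)=x,
  i.e. the continuous solution of the integral equation; extended by x outside [t,T].\<close>
definition traj ::
  "('n::euclidean_space \<Rightarrow> 'm \<Rightarrow> 'n) \<Rightarrow> real \<Rightarrow> real \<Rightarrow> 'n \<Rightarrow> (real \<Rightarrow> 'm) \<Rightarrow> real \<Rightarrow> 'n" where
  "traj f T t x u = (THE y. continuous_on {t..T} y \<and>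
      (\<forall>s\<in>{t..T}. (\<lambda>r. f (y r) (u r)) integrable_on {t..s} \<and>
                   y s = x + integral {t..s} (\<lambda>r. f (y r) (u r))) \<and>
      (\<forall>s. s \<notin> {t..T} \<longrightarrow> y s = x))"

definition Jcost ::
  "('n::euclidean_space \<Rightarrow> 'm \<Rightarrow> 'n) \<Rightarrow> ('n \<Rightarrow> 'm \<Rightarrow> 'p::euclidean_space) \<Rightarrow> real \<Rightarrow>
   real \<Rightarrow> real \<Rightarrow> 'n \<Rightarrow> (real \<Rightarrow> 'm) \<Rightarrow> 'p" where
  "Jcost f L T t t' x u = integral {t..t'} (\<lambda>s. L (traj f T t x u s) (u s))"

definition Yset ::
  "('n::euclidean_space \<Rightarrow> 'm::euclidean_space \<Rightarrow> 'n) \<Rightarrow> ('n \<Rightarrow> 'm \<Rightarrow> 'p::euclidean_space) \<Rightarrow> real \<Rightarrow>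
   'm set \<Rightarrow> real \<Rightarrow> 'n \<Rightarrow> 'p set" where
  "Yset f L T U t x = {Jcost f L T t T x u | u. u \<in> controls T U}"

definition eff :: "'p::real_vector set \<Rightarrow> 'p set \<Rightarrow> 'p set" where
  "eff S P = {y \<in> S. ((\<lambda>q. y - q) ` P) \<inter> S = {y}}"

definition Vset ::
  "('n::euclidean_space \<Rightarrow> 'm::euclidean_space \<Rightarrow> 'n) \<Rightarrow> ('n \<Rightarrow> 'm \<Rightarrow> 'p::euclidean_space) \<Rightarrow> real \<Rightarrow>
   'm set \<Rightarrow> 'p set \<Rightarrow> real \<Rightarrow> 'n \<Rightarrow> 'p set" where
  "Vset f L T U P t x = eff (closure (Yset f L T U t x)) P"

definition Ytilde ::
  "('n::euclidean_space \<Rightarrow> 'm::euclidean_space \<Rightarrow> 'n) \<Rightarrow> ('n \<Rightarrow> 'm \<Rightarrow> 'p::euclidean_space) \<Rightarrow> real \<Rightarrow>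
   'm set \<Rightarrow> 'p set \<Rightarrow> real \<Rightarrow> real \<Rightarrow> 'n \<Rightarrow> 'p set" where
  "Ytilde f L T U P \<tau> t x = (\<Union>u\<in>controls T U.
      (\<lambda>v. Jcost f L T t (t + \<tau>) x u + v) ` Vset f L T U P (t + \<tau>) (traj f T t x u (t + \<tau>)))"

end

theory Submission
  imports Defs
begin
lemma meas_int:
  fixes g :: "'a::euclidean_space \<Rightarrow> 'b::euclidean_space \<Rightarrow> 'c::euclidean_space"
  assumes g_cont: "continuous_on (UNIV \<times> U) (\<lambda>(x, u). g x u)"
    and g_bdd: "\<And>x u. u \<in> U \<Longrightarrow> norm (g x u) \<le> M"
    and u: "u \<in> controls T U" and y: "continuous_on {a..b} y"
    and ab: "0 \<le> a" "b \<le> T"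
  shows "(\<lambda>r. g (y r) (u r)) integrable_on {a..b}"
proof -
  have um: "u \<in> borel_measurable (lebesgue_on {a..b})"
    using u ab unfolding controls_def
    by (auto intro: measurable_restrict_mono)
  have ym: "y \<in> borel_measurable (lebesgue_on {a..b})"
    by (rule continuous_imp_measurable_on_sets_lebesgue[OF y]) auto
  have pm: "(\<lambda>r. (y r, u r)) \<in> borel_measurable (lebesgue_on {a..b})"
    using measurable_Pair[OF ym um] by (simp add: borel_prod)
  have pm2: "(\<lambda>r. (y r, u r)) \<in> measurable (lebesgue_on {a..b}) (restrict_space borel (UNIV \<times> U))"
    apply (rule measurable_restrict_space2[OF _ pm])
    using u ab unfolding controls_def by auto
  have gm: "(\<lambda>(x, u). g x u) \<in> borel_measurable (restrict_space borel (UNIV \<times> U))"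
    by (rule borel_measurable_continuous_on_restrict[OF g_cont])
  have fm: "(\<lambda>r. g (y r) (u r)) \<in> borel_measurable (lebesgue_on {a..b})"
    using measurable_comp[OF pm2 gm] by (simp add: comp_def)
  have "(\<lambda>r. g (y r) (u r)) absolutely_integrable_on {a..b}"
    apply (rule measurable_bounded_by_integrable_imp_absolutely_integrable[OF fm, where g="\<lambda>_. M"])
    using u ab unfolding controls_def by (auto intro!: g_bdd integrable_on_const)
  then show ?thesis using set_lebesgue_integral_eq_integral(1) by blast
qed

lemma poly_has_integral:
  fixes K D a c :: real
  assumes "a \<le> c"
  shows "((\<lambda>r. K * (K * (r - a))^k / fact k * D) has_integral (K * (c - a))^(Suc k) / fact (Suc k) * D) {a..c}"
proof -
  have d: "((\<lambda>r. (K * (r - a))^(Suc k) / fact (Suc k) * D) has_vector_derivative K * (K * (r - a))^k / fact k * D) (at r within {a..c})" for r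
  proof -
    have "((\<lambda>r. (K * (r - a))^(Suc k) / fact (Suc k) * D) has_real_derivative
        (real (Suc k) * (K * (r - a))^k * (K * 1)) / fact (Suc k) * D) (at r within {a..c})"
      by (intro derivative_eq_intros) auto
    moreover have "(real (Suc k) * (K * (r - a))^k * (K * 1)) / fact (Suc k) * D = K * (K * (r - a))^k / fact k * D"
      by (simp add: field_simps del: of_nat_Suc)
    ultimately show ?thesis by (simp only: has_real_derivative_iff_has_vector_derivative)
  qed
  show ?thesis
    using fundamental_theorem_of_calculus[OF assms d] by simp
qed

definition solves :: "('n::euclidean_space \<Rightarrow> 'm::euclidean_space \<Rightarrow> 'n) \<Rightarrow> real \<Rightarrow> real \<Rightarrow> 'n \<Rightarrow> (real \<Rightarrow> 'm) \<Rightarrow> (real \<Rightarrow> 'n) \<Rightarrow> bool" where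
  "solves f T t x u y \<longleftrightarrow> continuous_on {t..T} y \<and>
      (\<forall>s\<in>{t..T}. (\<lambda>r. f (y r) (u r)) integrable_on {t..s} \<and>
                   y s = x + integral {t..s} (\<lambda>r. f (y r) (u r))) \<and>
      (\<forall>s. s \<notin> {t..T} \<longrightarrow> y s = x)"

lemma traj_eq_The: "traj f T t x u = (THE y. solves f T t x u y)"
  unfolding traj_def solves_def by simp

definition clamp :: "real \<Rightarrow> real \<Rightarrow> real \<Rightarrow> real" where
  "clamp a b s = max a (min b s)"

lemma clamp_in: "a \<le> b \<Longrightarrow> clamp a b s \<in> {a..b}"
  by (auto simp: clamp_def)

lemma clamp_id: "s \<in> {a..b} \<Longrightarrow> clamp a b s = s"
  by (auto simp: clamp_def)

lemma continuous_clamp: "continuous_on S (clamp a b)"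
  unfolding clamp_def by (intro continuous_intros)

definition PhiOp :: "('n::euclidean_space \<Rightarrow> 'm::euclidean_space \<Rightarrow> 'n) \<Rightarrow> real \<Rightarrow> real \<Rightarrow> 'n \<Rightarrow> (real \<Rightarrow> 'm)
   \<Rightarrow> (real \<Rightarrow>\<^sub>C 'n) \<Rightarrow> (real \<Rightarrow>\<^sub>C 'n)" where
  "PhiOp f T t0 x0 u y = Bcontfun (\<lambda>s. x0 + integral {t0..clamp t0 T s} (\<lambda>r. f (y r) (u r)))"

context
  fixes f :: "'n::euclidean_space \<Rightarrow> 'm::euclidean_space \<Rightarrow> 'n" and U :: "'m set" and T Kf Mf :: real
  assumes f_cont: "continuous_on (UNIV \<times> U) (\<lambda>(x, u). f x u)"
    and f_lip: "\<And>x1 x2 u. u \<in> U \<Longrightarrow> norm (f x1 u - f x2 u) \<le> Kf * norm (x1 - x2)"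
    and f_bdd: "\<And>x u. u \<in> U \<Longrightarrow> norm (f x u) \<le> Mf"
    and Kf: "0 \<le> Kf"
begin

lemma int_f: "u \<in> controls T U \<Longrightarrow> continuous_on {a..b} y \<Longrightarrow> 0 \<le> a \<Longrightarrow> b \<le> T \<Longrightarrow>
   (\<lambda>r. f (y r) (u r)) integrable_on {a..b}"
  by (rule meas_int[OF f_cont f_bdd])

lemma int_bound:
  assumes "u \<in> controls T U" "continuous_on {a..b} y" "0 \<le> a" "a \<le> b" "b \<le> T"
  shows "norm (integral {a..b} (\<lambda>r. f (y r) (u r))) \<le> Mf * (b - a)"
proof -
  have "norm (integral {a..b} (\<lambda>r. f (y r) (u r))) \<le> integral {a..b} (\<lambda>_. Mf)"
    apply (rule integral_norm_bound_integral[OF int_f[OF assms(1,2,3,5)]])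
     apply (rule integrable_const_ivl)
    using assms(1,3,5) unfolding controls_def by (auto intro!: f_bdd)
  then show ?thesis using assms by (simp add: mult.commute)
qed

context
  fixes t0 :: real and x0 :: 'n and u :: "real \<Rightarrow> 'm"
  assumes t0: "0 \<le> t0" "t0 \<le> T" and u: "u \<in> controls T U"
begin

lemma Phi_mem: "(\<lambda>s. x0 + integral {t0..clamp t0 T s} (\<lambda>r. f (apply_bcontfun y r) (u r))) \<in> bcontfun"
proof (rule bcontfun_normI)
  have ii: "(\<lambda>r. f (apply_bcontfun y r) (u r)) integrable_on {t0..T}"
    by (rule int_f[OF u]) (use t0 in auto)
  show "continuous_on UNIV (\<lambda>s. x0 + integral {t0..clamp t0 T s} (\<lambda>r. f (apply_bcontfun y r) (u r)))"
    apply (intro continuous_intros)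
    apply (rule continuous_on_compose2[OF indefinite_integral_continuous_1[OF ii] continuous_clamp])
    using clamp_in t0 by auto
  fix s
  have c: "clamp t0 T s \<in> {t0..T}" using clamp_in t0 by auto
  have "norm (integral {t0..clamp t0 T s} (\<lambda>r. f (apply_bcontfun y r) (u r))) \<le> Mf * (clamp t0 T s - t0)"
    by (rule int_bound[OF u]) (use c t0 in auto)
  also have "\<dots> \<le> \<bar>Mf\<bar> * (T - t0)"
    using c by (intro mult_mono) auto
  finally show "norm (x0 + integral {t0..clamp t0 T s} (\<lambda>r. f (apply_bcontfun y r) (u r))) \<le> norm x0 + \<bar>Mf\<bar> * (T - t0)"
    by (meson norm_triangle_mono order_refl)
qed

lemma Phi_apply: "apply_bcontfun (PhiOp f T t0 x0 u y) s = x0 + integral {t0..clamp t0 T s} (\<lambda>r. f (y r) (u r))"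
  unfolding PhiOp_def using Phi_mem by (simp add: Bcontfun_inverse)

lemma Phi_iter_bound:
  "norm (apply_bcontfun ((PhiOp f T t0 x0 u ^^ k) y) s - apply_bcontfun ((PhiOp f T t0 x0 u ^^ k) z) s)
     \<le> (Kf * (clamp t0 T s - t0))^k / fact k * dist y z"
proof (induction k arbitrary: s)
  case 0
  then show ?case using dist_bounded[of y s z] by (simp add: dist_norm)
next
  case (Suc k)
  define Y where "Y = (PhiOp f T t0 x0 u ^^ k) y"
  define Z where "Z = (PhiOp f T t0 x0 u ^^ k) z"
  define c where "c = clamp t0 T s"
  have c: "t0 \<le> c" "c \<le> T" using clamp_in[OF t0(2)] c_def by auto
  have iY: "(\<lambda>r. f (apply_bcontfun Y r) (u r)) integrable_on {t0..c}"
    by (rule int_f[OF u]) (use c t0 in auto)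
  have iZ: "(\<lambda>r. f (apply_bcontfun Z r) (u r)) integrable_on {t0..c}"
    by (rule int_f[OF u]) (use c t0 in auto)
  have eq: "apply_bcontfun ((PhiOp f T t0 x0 u ^^ Suc k) y) s - apply_bcontfun ((PhiOp f T t0 x0 u ^^ Suc k) z) s
      = integral {t0..c} (\<lambda>r. f (apply_bcontfun Y r) (u r) - f (apply_bcontfun Z r) (u r))"
    by (simp add: Y_def Z_def c_def Phi_apply integral_diff[OF iY[unfolded Y_def c_def] iZ[unfolded Z_def c_def]])
  have b: "norm (f (apply_bcontfun Y r) (u r) - f (apply_bcontfun Z r) (u r)) \<le> Kf * (Kf * (r - t0))^k / fact k * dist y z"
    if r: "r \<in> {t0..c}" for r
  proof -
    have uU: "u r \<in> U" using u r c t0 unfolding controls_def by auto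
    have cr: "clamp t0 T r = r" using r c by (intro clamp_id) auto
    have "norm (f (apply_bcontfun Y r) (u r) - f (apply_bcontfun Z r) (u r)) \<le> Kf * norm (apply_bcontfun Y r - apply_bcontfun Z r)"
      by (rule f_lip[OF uU])
    also have "\<dots> \<le> Kf * ((Kf * (r - t0))^k / fact k * dist y z)"
      using Suc.IH[of r] cr Kf unfolding Y_def Z_def by (intro mult_left_mono) auto
    finally show ?thesis by simp
  qed
  have "norm (integral {t0..c} (\<lambda>r. f (apply_bcontfun Y r) (u r) - f (apply_bcontfun Z r) (u r)))
      \<le> integral {t0..c} (\<lambda>r. Kf * (Kf * (r - t0))^k / fact k * dist y z)"
    apply (rule integral_norm_bound_integral)
      apply (rule integrable_diff[OF iY iZ])
     apply (rule has_integral_integrable[OF poly_has_integral[OF c(1)]])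
    using b by blast
  also have "\<dots> = (Kf * (c - t0))^(Suc k) / fact (Suc k) * dist y z"
    using poly_has_integral[OF c(1)] by (rule integral_unique)
  finally show ?case using eq c_def by simp
qed

lemma Phi_iter_dist:
  "dist ((PhiOp f T t0 x0 u ^^ k) y) ((PhiOp f T t0 x0 u ^^ k) z) \<le> (Kf * (T - t0))^k / fact k * dist y z"
proof (rule dist_bound)
  fix s
  have c: "clamp t0 T s \<in> {t0..T}" using clamp_in t0 by auto
  have "(Kf * (clamp t0 T s - t0))^k \<le> (Kf * (T - t0))^k"
    using c Kf by (intro power_mono mult_left_mono) auto
  then have "(Kf * (clamp t0 T s - t0))^k / fact k * dist y z \<le> (Kf * (T - t0))^k / fact k * dist y z"
    by (intro mult_right_mono divide_right_mono) auto
  then show "dist (apply_bcontfun ((PhiOp f T t0 x0 u ^^ k) y) s) (apply_bcontfun ((PhiOp f T t0 x0 u ^^ k) z) s) \<le> (Kf * (T - t0))^k / fact k * dist y z"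
    using Phi_iter_bound[of k y s z] by (simp add: dist_norm)
qed

lemma Phi_unique_fix: "\<exists>!p. PhiOp f T t0 x0 u p = p"
proof -
  let ?a = "Kf * (T - t0)"
  have "(\<lambda>n. inverse (fact n) * ?a ^ n) \<longlonglongrightarrow> 0"
    by (rule summable_LIMSEQ_zero[OF summable_exp])
  then obtain k where k: "norm (inverse (fact k) * ?a ^ k - 0) < 1"
    by (meson LIMSEQ_iff zero_less_one order_refl)
  define c where "c = ?a ^ k / fact k"
  have c0: "0 \<le> c" using Kf t0 unfolding c_def by auto
  have c1: "c < 1" using k c0 unfolding c_def by (simp add: field_simps)
  let ?F = "PhiOp f T t0 x0 u ^^ k"
  have "\<exists>!p. ?F p = p"
    by (rule banach_fix_type[OF c0 c1]) (use Phi_iter_dist c_def in auto)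
  then obtain p where p: "?F p = p" and pu: "\<And>q. ?F q = q \<Longrightarrow> q = p" by metis
  have "?F (PhiOp f T t0 x0 u p) = PhiOp f T t0 x0 u p"
    by (metis p funpow_swap1)
  then have fp: "PhiOp f T t0 x0 u p = p" using pu by blast
  have "q = p" if "PhiOp f T t0 x0 u q = q" for q
  proof -
    have "(PhiOp f T t0 x0 u ^^ j) q = q" for j
      by (induction j) (use that in auto)
    then show ?thesis using pu by blast
  qed
  then show ?thesis using fp by blast
qed

lemma solves_unique_ex: "\<exists>!y. solves f T t0 x0 u y"
proof -
  obtain p where fp: "PhiOp f T t0 x0 u p = p" and pu: "\<And>q. PhiOp f T t0 x0 u q = q \<Longrightarrow> q = p"
    using Phi_unique_fix by metis
  define y where "y s = (if s \<in> {t0..T} then apply_bcontfun p s else x0)" for s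
  have ex: "solves f T t0 x0 u y"
    unfolding solves_def
  proof (intro conjI ballI allI impI)
    show "continuous_on {t0..T} y"
      by (rule continuous_on_eq[of _ "apply_bcontfun p"]) (auto simp: y_def)
    fix s assume s: "s \<in> {t0..T}"
    have cy: "continuous_on {t0..s} y"
      by (rule continuous_on_eq[of _ "apply_bcontfun p"]) (use s in \<open>auto simp: y_def\<close>)
    show "(\<lambda>r. f (y r) (u r)) integrable_on {t0..s}"
      by (rule int_f[OF u cy]) (use s t0 in auto)
    have "y s = apply_bcontfun (PhiOp f T t0 x0 u p) s" using s fp by (simp add: y_def)
    also have "\<dots> = x0 + integral {t0..s} (\<lambda>r. f (apply_bcontfun p r) (u r))"
      using s by (simp add: Phi_apply clamp_id)
    also have "\<dots> = x0 + integral {t0..s} (\<lambda>r. f (y r) (u r))"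
      using s by (intro arg_cong2[where f="(+)"] refl Henstock_Kurzweil_Integration.integral_cong) (auto simp: y_def)
    finally show "y s = x0 + integral {t0..s} (\<lambda>r. f (y r) (u r))" .
  next
    fix s assume "s \<notin> {t0..T}" then show "y s = x0" unfolding y_def by presburger
  qed
  have un: "y1 s = y s" if y1: "solves f T t0 x0 u y1" for y1 s
  proof -
    have c1: "continuous_on {t0..T} y1" using y1 unfolding solves_def by auto
    have mem: "(\<lambda>s. y1 (clamp t0 T s)) \<in> bcontfun"
      unfolding bcontfun_def
    proof (intro CollectI conjI)
      show "continuous_on UNIV (\<lambda>s. y1 (clamp t0 T s))"
        by (rule continuous_on_compose2[OF c1 continuous_clamp]) (use clamp_in t0 in auto)
      have "range (\<lambda>s. y1 (clamp t0 T s)) \<subseteq> y1 ` {t0..T}" using clamp_in t0 by auto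
      moreover have "bounded (y1 ` {t0..T})"
        by (intro compact_imp_bounded compact_continuous_image c1) auto
      ultimately show "bounded (range (\<lambda>s. y1 (clamp t0 T s)))" by (rule bounded_subset[rotated])
    qed
    define q where "q = Bcontfun (\<lambda>s. y1 (clamp t0 T s))"
    have qa: "apply_bcontfun q s = y1 (clamp t0 T s)" for s
      unfolding q_def using mem by (simp add: Bcontfun_inverse)
    have "PhiOp f T t0 x0 u q = q"
    proof (rule bcontfun_eqI)
      fix s
      define c where "c = clamp t0 T s"
      have c: "c \<in> {t0..T}" using clamp_in t0 c_def by auto
      have "apply_bcontfun (PhiOp f T t0 x0 u q) s = x0 + integral {t0..c} (\<lambda>r. f (apply_bcontfun q r) (u r))"
        by (simp add: Phi_apply c_def)
      also have "\<dots> = x0 + integral {t0..c} (\<lambda>r. f (y1 r) (u r))"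
        using c by (intro arg_cong2[where f="(+)"] refl Henstock_Kurzweil_Integration.integral_cong) (auto simp: qa clamp_id)
      also have "\<dots> = y1 c" using y1 c unfolding solves_def by auto
      finally show "apply_bcontfun (PhiOp f T t0 x0 u q) s = apply_bcontfun q s" by (simp add: qa c_def)
    qed
    then have "q = p" by (rule pu)
    show ?thesis
    proof (cases "s \<in> {t0..T}")
      case True
      then show ?thesis using \<open>q = p\<close> qa[of s] by (simp add: y_def clamp_id)
    next
      case False
      then show ?thesis using y1 unfolding y_def solves_def by (metis (full_types))
    qed
  qed
  show ?thesis using ex un by (intro ex1I[of _ y]) auto
qed

lemma traj_solves: "solves f T t0 x0 u (traj f T t0 x0 u)"
  unfolding traj_eq_The by (rule theI'[OF solves_unique_ex])

lemma traj_unique: "solves f T t0 x0 u y \<Longrightarrow> traj f T t0 x0 u = y"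
  unfolding traj_eq_The using solves_unique_ex by (rule the1_equality)

end

lemma concat_control:
  assumes u: "u \<in> controls T U" and w: "w \<in> controls T U"
  shows "(\<lambda>r. if r \<le> c then u r else w r) \<in> controls T U"
proof -
  have "(\<lambda>r. if r \<in> {..c} then u r else w r) \<in> borel_measurable (lebesgue_on {0..T})"
  proof (rule measurable_If_set)
    show "u \<in> borel_measurable (lebesgue_on {0..T})" "w \<in> borel_measurable (lebesgue_on {0..T})"
      using u w unfolding controls_def by auto
    have "{..c} \<inter> {0..T} \<in> sets lebesgue" by (intro sets.Int) auto
    then show "{..c} \<inter> space (lebesgue_on {0..T}) \<in> sets (lebesgue_on {0..T})"
      by (subst sets_restrict_space_iff) auto
  qed
  moreover have "bounded ((\<lambda>r. if r \<le> c then u r else w r) ` {0..T})"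
  proof -
    have "(\<lambda>r. if r \<le> c then u r else w r) ` {0..T} \<subseteq> u ` {0..T} \<union> w ` {0..T}" by auto
    moreover have "bounded (u ` {0..T} \<union> w ` {0..T})" using u w unfolding controls_def by auto
    ultimately show ?thesis by (rule bounded_subset[rotated])
  qed
  ultimately show ?thesis using u w unfolding controls_def by auto
qed

lemma concat_traj:
  fixes x :: 'n
  assumes t: "0 \<le> t" "t \<le> c" "c \<le> T" and u: "u \<in> controls T U" and w: "w \<in> controls T U"
  defines "uc \<equiv> (\<lambda>r. if r \<le> c then u r else w r)"
  defines "y1 \<equiv> traj f T t x u"
  defines "y2 \<equiv> traj f T c (y1 c) w"
  shows "traj f T t x uc = (\<lambda>s. if s \<notin> {t..T} then x else if s \<le> c then y1 s else y2 s)"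
proof (rule traj_unique)
  show "0 \<le> t" "t \<le> T" using t by auto
  show ucc: "uc \<in> controls T U" unfolding uc_def by (rule concat_control[OF u w])
  define Y where "Y = (\<lambda>s. if s \<notin> {t..T} then x else if s \<le> c then y1 s else y2 s)"
  have s1: "solves f T t x u y1" unfolding y1_def by (rule traj_solves) (use t u in auto)
  have s2: "solves f T c (y1 c) w y2" unfolding y2_def by (rule traj_solves) (use t w in auto)
  have y2c: "y2 c = y1 c" using s2 t unfolding solves_def by auto
  have cY1: "continuous_on {t..c} Y"
    apply (rule continuous_on_eq[of _ y1])
    using s1 t unfolding solves_def Y_def by (auto intro: continuous_on_subset)
  have cY2: "continuous_on {c..T} Y"
    apply (rule continuous_on_eq[of _ y2])
    using s2 t y2c unfolding solves_def Y_def by auto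
  have cY: "continuous_on {t..T} Y"
  proof -
    have "{t..T} = {t..c} \<union> {c..T}" using t by auto
    then show ?thesis using continuous_on_closed_Un[OF _ _ cY1 cY2] by auto
  qed
  have iY: "(\<lambda>r. f (Y r) (uc r)) integrable_on {a..b}" if "t \<le> a" "b \<le> T" for a b
    by (rule int_f[OF ucc]) (use that t in \<open>auto intro: continuous_on_subset[OF cY]\<close>)
  show "solves f T t x uc Y"
    unfolding solves_def
  proof (intro conjI ballI allI impI cY)
    fix s assume s: "s \<in> {t..T}"
    show "(\<lambda>r. f (Y r) (uc r)) integrable_on {t..s}" using iY s by auto
    show "Y s = x + integral {t..s} (\<lambda>r. f (Y r) (uc r))"
    proof (cases "s \<le> c")
      case True
      have "Y s = y1 s" using s True by (simp add: Y_def)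
      also have "\<dots> = x + integral {t..s} (\<lambda>r. f (y1 r) (u r))" using s1 s unfolding solves_def by auto
      also have "\<dots> = x + integral {t..s} (\<lambda>r. f (Y r) (uc r))"
        using s True by (intro arg_cong2[where f="(+)"] refl Henstock_Kurzweil_Integration.integral_cong) (auto simp: Y_def uc_def)
      finally show ?thesis .
    next
      case False
      have e1: "integral {t..c} (\<lambda>r. f (Y r) (uc r)) = integral {t..c} (\<lambda>r. f (y1 r) (u r))"
        using t by (intro Henstock_Kurzweil_Integration.integral_cong) (auto simp: Y_def uc_def)
      have e2: "integral {c..s} (\<lambda>r. f (Y r) (uc r)) = integral {c..s} (\<lambda>r. f (y2 r) (w r))"
        apply (rule integral_spike[of "{c}"])
        using s False t by (auto simp: Y_def uc_def)
      have "Y s = y2 s" using s False by (simp add: Y_def)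
      also have "\<dots> = y1 c + integral {c..s} (\<lambda>r. f (y2 r) (w r))" using s2 s False unfolding solves_def by auto
      also have "y1 c = x + integral {t..c} (\<lambda>r. f (y1 r) (u r))" using s1 t unfolding solves_def by auto
      also have "x + integral {t..c} (\<lambda>r. f (y1 r) (u r)) + integral {c..s} (\<lambda>r. f (y2 r) (w r))
          = x + (integral {t..c} (\<lambda>r. f (Y r) (uc r)) + integral {c..s} (\<lambda>r. f (Y r) (uc r)))"
        by (simp add: e1 e2)
      also have "\<dots> = x + integral {t..s} (\<lambda>r. f (Y r) (uc r))"
        using Henstock_Kurzweil_Integration.integral_combine[where a=t and c=c and b=s and f="\<lambda>r. f (Y r) (uc r)"] s False t iY[of t s] by auto
      finally show ?thesis .
    qed
  next
    fix s assume "s \<notin> {t..T}" then show "Y s = x" by (simp add: Y_def)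
  qed
qed


lemma concat_J:
  fixes L :: "'n \<Rightarrow> 'm \<Rightarrow> 'p::euclidean_space" and x :: 'n and Mbd :: real
  assumes L_cont: "continuous_on (UNIV \<times> U) (\<lambda>(x, u). L x u)"
    and L_bdd: "\<And>x u. u \<in> U \<Longrightarrow> norm (L x u) \<le> Mbd"
    and t: "0 \<le> t" "t \<le> c" "c \<le> T" and u: "u \<in> controls T U" and w: "w \<in> controls T U"
  shows "Jcost f L T t T x (\<lambda>r. if r \<le> c then u r else w r)
       = Jcost f L T t c x u + Jcost f L T c T (traj f T t x u c) w"
proof -
  define uc where "uc = (\<lambda>r. if r \<le> c then u r else w r)"
  define Z where "Z = traj f T t x uc"
  have ucc: "uc \<in> controls T U" unfolding uc_def by (rule concat_control[OF u w])
  have Zeq: "Z = (\<lambda>s. if s \<notin> {t..T} then x else if s \<le> c then traj f T t x u s else traj f T c (traj f T t x u c) w s)"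
    unfolding Z_def uc_def by (rule concat_traj[OF t u w])
  have sZ: "solves f T t x uc Z" unfolding Z_def by (rule traj_solves) (use t ucc in auto)
  have cZ: "continuous_on {t..T} Z" using sZ unfolding solves_def by auto
  have iZ: "(\<lambda>s. L (Z s) (uc s)) integrable_on {t..T}"
    by (rule meas_int[OF L_cont L_bdd ucc cZ]) (use t in auto)
  have "Jcost f L T t T x uc = integral {t..T} (\<lambda>s. L (Z s) (uc s))"
    by (simp add: Jcost_def Z_def)
  also have "\<dots> = integral {t..c} (\<lambda>s. L (Z s) (uc s)) + integral {c..T} (\<lambda>s. L (Z s) (uc s))"
    using Henstock_Kurzweil_Integration.integral_combine[where a=t and c=c and b=T and f="\<lambda>s. L (Z s) (uc s)"] t iZ
    by auto
  also have "integral {t..c} (\<lambda>s. L (Z s) (uc s)) = Jcost f L T t c x u"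
    unfolding Jcost_def
    using t by (intro Henstock_Kurzweil_Integration.integral_cong) (auto simp: Zeq uc_def)
  also have "integral {c..T} (\<lambda>s. L (Z s) (uc s)) = Jcost f L T c T (traj f T t x u c) w"
    unfolding Jcost_def
    apply (rule integral_spike[of "{c}"])
    using t by (auto simp: Zeq uc_def)
  finally show ?thesis unfolding uc_def .
qed
end

theorem lemma5p2:
  fixes f :: "real ^ 'n \<Rightarrow> real ^ 'm \<Rightarrow> real ^ 'n"
    and L :: "real ^ 'n \<Rightarrow> real ^ 'm \<Rightarrow> real ^ 'p"
    and U :: "(real ^ 'm) set" and P :: "(real ^ 'p) set"
    and T Kf Mf K_L M_L :: real
  assumes T_pos: "T > 0"
    and U: "U \<noteq> {}" "compact U"
    and f_cont: "continuous_on (UNIV \<times> U) (\<lambda>(x, u). f x u)"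
    and f_lip: "\<And>x1 x2 u. u \<in> U \<Longrightarrow> norm (f x1 u - f x2 u) \<le> Kf * norm (x1 - x2)"
    and f_bdd: "\<And>x u. u \<in> U \<Longrightarrow> norm (f x u) \<le> Mf"
    and L_cont: "continuous_on (UNIV \<times> U) (\<lambda>(x, u). L x u)"
    and L_lip: "\<And>x1 x2 u. u \<in> U \<Longrightarrow> norm (L x1 u - L x2 u) \<le> K_L * norm (x1 - x2)"
    and L_bdd: "\<And>x u. u \<in> U \<Longrightarrow> norm (L x u) \<le> M_L"
    and P: "closed P" "convex P" "cone P" "0 \<in> P" "P \<inter> uminus ` P = {0}" "interior P \<noteq> {}"
    and t: "t \<in> {0..T}"
    and tau: "0 < \<tau>" "\<tau> < T - t"
  shows "Ytilde f L T U P \<tau> t x \<subseteq> closure (Yset f L T U t x)"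
proof
  fix z assume z: "z \<in> Ytilde f L T U P \<tau> t x"
  obtain u0 where u0: "u0 \<in> U" using U by auto
  obtain b :: "real ^ 'n" where b: "b \<in> Basis" using nonempty_Basis by blast
  have "0 \<le> norm (f 0 u0 - f b u0)" by simp
  also have "\<dots> \<le> Kf * norm (0 - b)" by (rule f_lip[OF u0])
  finally have Kf: "0 \<le> Kf" using b by simp
  define c where "c = t + \<tau>"
  have tc: "0 \<le> t" "t \<le> c" "c \<le> T" using t tau c_def by auto
  from z obtain u v where u: "u \<in> controls T U"
    and v: "v \<in> Vset f L T U P c (traj f T t x u c)"
    and zv: "z = Jcost f L T t c x u + v"
    unfolding Ytilde_def c_def by blast
  define x' where "x' = traj f T t x u c"
  define J where "J = Jcost f L T t c x u"
  have vc: "v \<in> closure (Yset f L T U c x')"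
    using v unfolding Vset_def eff_def x'_def by blast
  have sub: "(+) J ` Yset f L T U c x' \<subseteq> Yset f L T U t x"
  proof
    fix y assume "y \<in> (+) J ` Yset f L T U c x'"
    then obtain w where w: "w \<in> controls T U" and y: "y = J + Jcost f L T c T x' w"
      unfolding Yset_def by blast
    have "y = Jcost f L T t T x (\<lambda>r. if r \<le> c then u r else w r)"
      unfolding y J_def x'_def
      by (rule concat_J[OF f_cont f_lip f_bdd Kf L_cont L_bdd tc u w, symmetric])
    moreover have "(\<lambda>r. if r \<le> c then u r else w r) \<in> controls T U"
      by (rule concat_control[OF f_cont f_lip f_bdd Kf u w])
    ultimately show "y \<in> Yset f L T U t x" unfolding Yset_def by blast
  qed
  have "z \<in> (+) J ` closure (Yset f L T U c x')" using vc zv J_def by blast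
  also have "\<dots> = closure ((+) J ` Yset f L T U c x')" by (rule closure_translation[symmetric])
  also have "\<dots> \<subseteq> closure (Yset f L T U t x)" by (rule closure_mono[OF sub])
  finally show "z \<in> closure (Yset f L T U t x)" .
qed

end
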